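(* Let $G$ be a flat affine group scheme over $R$, $N\to G$ the automatic blowup of the identity, and $\varepsilon_K:K[G]\to K$ the counit. Then $R[N]=\{f\in K[G]:\varepsilon_K(f)\in R\}$; equivalently, the first projection $K[G]\times_{\varepsilon_K,K}R\to K[G]$ is an isomorphism onto $R[N]$. Geometrically, $N\simeq G_K\amalg_{e,\mathrm{Spec}\,K}\mathrm{Spec}\,R$ as $R$-schemes (pushout of $G_K\xleftarrow{e}\mathrm{Spec}\,K\to\mathrm{Spec}\,R$).
   Context: $R$ is a discrete valuation ring with uniformizer $\pi$, fraction field $K$, residue field $k$; $R[G]\subset K[G]$ for flat $G$. The Neron blowup of a flat affine group scheme $H$ at a closed subgroup of $H\otimes k$ with ideal $J\subset R[H]$ (inverse image of its ideal) is $\mathrm{Spec}$ of the subring of $K[H]$ generated by $R[H]$ and $\pi^{-1}J$. The automatic blowup of the identity $N\to G$ is the limit of $\cdots\to G_{n+1}\to G_n\to\cdots\to G_0=G$, where $G_{n+1}\to G_n$ is the Neron blowup of $G_n$ at $\{e\}\subset G_n\otimes k$. *)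

theory Defs
  imports Main
begin

definition subring_of :: "'a::comm_ring_1 set \<Rightarrow> bool" where
  "subring_of B \<longleftrightarrow> 0 \<in> B \<and> 1 \<in> B \<and>
     (\<forall>x\<in>B. \<forall>y\<in>B. x + y \<in> B \<and> x - y \<in> B \<and> x * y \<in> B)"

definition subring_gen :: "'a::comm_ring_1 set \<Rightarrow> 'a set" where
  "subring_gen S = \<Inter> {B. subring_of B \<and> S \<subseteq> B}"

text \<open>R is a discrete valuation ring with uniformizer pi and fraction field K
  (= the ambient field type 'k): R is a subring of K, and every nonzero x in K
  is uniquely u * pi^n with n an integer and u a unit of R; R consists of 0 and
  the elements with n >= 0.\<close>
definition dvr :: "'k::field set \<Rightarrow> 'k \<Rightarrow> bool" where
  "dvr R pi \<longleftrightarrow> subring_of R \<and> pi \<in> R \<and> pi \<noteq> 0 \<and>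
     (\<forall>x. x \<noteq> 0 \<longrightarrow> (\<exists>!p. fst p \<in> R \<and> inverse (fst p) \<in> R \<and>
                              x = fst p * pi powi snd p)) \<and>
     R = insert 0 {u * pi ^ n | u n. u \<in> R \<and> inverse u \<in> R}"

text \<open>A = R[H] inside L = K[G]; eps = counit of K[G] (restricting to that of R[H]);
  J = {f in R[H]. eps f in pi R} is the inverse image of the ideal of the
  identity section of H tensor k; the new ring is generated by A and pi^{-1} J.\<close>
definition neron_blowup_id ::
  "('k::field \<Rightarrow> 'a::comm_ring_1) \<Rightarrow> ('a \<Rightarrow> 'k) \<Rightarrow> 'k set \<Rightarrow> 'k \<Rightarrow> 'a set \<Rightarrow> 'a set" where
  "neron_blowup_id iota eps R pi A =
     subring_gen (A \<union> {iota (inverse pi) * f | f. f \<in> A \<and> eps f \<in> (\<lambda>r. pi * r) ` R})"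

primrec auto_blowup_ring ::
  "('k::field \<Rightarrow> 'a::comm_ring_1) \<Rightarrow> ('a \<Rightarrow> 'k) \<Rightarrow> 'k set \<Rightarrow> 'k \<Rightarrow> 'a set \<Rightarrow> nat \<Rightarrow> 'a set" where
  "auto_blowup_ring iota eps R pi A0 0 = A0"
| "auto_blowup_ring iota eps R pi A0 (Suc n) =
     neron_blowup_id iota eps R pi (auto_blowup_ring iota eps R pi A0 n)"

text \<open>R[N] = colimit (union inside K[G]) of the R[G_n].\<close>
definition auto_blowup_limit_ring ::
  "('k::field \<Rightarrow> 'a::comm_ring_1) \<Rightarrow> ('a \<Rightarrow> 'k) \<Rightarrow> 'k set \<Rightarrow> 'k \<Rightarrow> 'a set \<Rightarrow> 'a set" where
  "auto_blowup_limit_ring iota eps R pi A0 = (\<Union>n. auto_blowup_ring iota eps R pi A0 n)"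

end

theory Submission
  imports Defs
begin

lemma sg_sub: "S \<subseteq> subring_gen S"
  unfolding subring_gen_def by blast

lemma sg_least: "subring_of B \<Longrightarrow> S \<subseteq> B \<Longrightarrow> subring_gen S \<subseteq> B"
  unfolding subring_gen_def by blast

lemma sub_pow: "subring_of R \<Longrightarrow> p \<in> R \<Longrightarrow> p ^ n \<in> R"
  by (induction n) (auto simp: subring_of_def)

theorem corollary2p21:
  fixes R :: "'k::field set" and pi :: 'k
    and iota :: "'k \<Rightarrow> 'a::comm_ring_1"
    and eps :: "'a \<Rightarrow> 'k"
    and A0 :: "'a set"
  assumes dvr: "dvr R pi"
    and iota_hom: "iota 1 = 1" "\<And>x y. iota (x + y) = iota x + iota y"
                  "\<And>x y. iota (x * y) = iota x * iota y"
    and eps_hom: "eps 1 = 1" "\<And>f g. eps (f + g) = eps f + eps g"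
                 "\<And>f g. eps (f * g) = eps f * eps g"
    and eps_lin: "\<And>c. eps (iota c) = c"
    and A0_sub: "subring_of A0"
    and A0_R: "iota ` R \<subseteq> A0"
    and A0_gen: "\<And>f. \<exists>m::nat. iota (pi ^ m) * f \<in> A0"
    and eps_A0: "eps ` A0 \<subseteq> R"
  shows "auto_blowup_limit_ring iota eps R pi A0 = {f. eps f \<in> R}"
proof -
  have Rs: "subring_of R" and piR: "pi \<in> R" and pi0: "pi \<noteq> 0"
    using dvr unfolding dvr_def by auto
  have e0: "eps 0 = 0" proof - have "eps 0 + eps 0 = eps 0 + 0" using eps_hom(2)[of 0 0] by simp thus ?thesis by (rule add_left_imp_eq) qed
  have emin: "eps (x - y) = eps x - eps y" for x y
    using eps_hom(2)[of "x - y" y] by (simp add: algebra_simps)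
  have Bs: "subring_of {f. eps f \<in> R}"
    using Rs e0 eps_hom unfolding subring_of_def by (auto simp: emin)
  let ?A = "auto_blowup_ring iota eps R pi A0"
  have up: "?A n \<subseteq> {f. eps f \<in> R}" for n
  proof (induction n)
    case 0 then show ?case using eps_A0 by auto
  next
    case (Suc n)
    have "{iota (inverse pi) * f | f. f \<in> ?A n \<and> eps f \<in> (\<lambda>r. pi * r) ` R}
          \<subseteq> {f. eps f \<in> R}"
    proof
      fix x assume "x \<in> {iota (inverse pi) * f | f. f \<in> ?A n \<and> eps f \<in> (\<lambda>r. pi * r) ` R}"
      then obtain f r where x: "x = iota (inverse pi) * f" "eps f = pi * r" "r \<in> R" by blast
      have "eps x = eps (iota (inverse pi)) * eps f" using x(1) eps_hom(3) by simp
      also have "\<dots> = inverse pi * (pi * r)" using x(2) eps_lin by simp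
      also have "\<dots> = r" using pi0 by (simp add: field_simps)
      finally have "eps x = r" .
      then show "x \<in> {f. eps f \<in> R}" using x(3) by simp
    qed
    then show ?case unfolding auto_blowup_ring.simps neron_blowup_id_def
      using Suc by (intro sg_least[OF Bs]) auto
  qed
  have mono: "?A n \<subseteq> ?A (Suc n)" for n
    unfolding auto_blowup_ring.simps neron_blowup_id_def using sg_sub by blast
  have step: "iota (pi ^ m) * f \<in> ?A (Suc n)"
    if "eps f \<in> R" "iota (pi ^ Suc m) * f \<in> ?A n" for m n f
  proof -
    let ?g = "iota (pi ^ Suc m) * f"
    have "pi ^ m * eps f \<in> R" using sub_pow[OF Rs piR] that(1) Rs
      unfolding subring_of_def by blast
    then have "pi * (pi ^ m * eps f) \<in> (\<lambda>r. pi * r) ` R" by (rule imageI)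
    moreover have "eps ?g = pi * (pi ^ m * eps f)"
    proof -
      have "eps ?g = eps (iota (pi ^ Suc m)) * eps f" by (rule eps_hom(3))
      also have "\<dots> = pi ^ Suc m * eps f" by (simp only: eps_lin)
      also have "\<dots> = pi * (pi ^ m * eps f)" by (simp only: power_Suc mult.assoc)
      finally show ?thesis .
    qed
    ultimately have "eps ?g \<in> (\<lambda>r. pi * r) ` R" by (simp only:)
    hence "iota (inverse pi) * ?g \<in> {iota (inverse pi) * f | f. f \<in> ?A n \<and> eps f \<in> (\<lambda>r. pi * r) ` R}"
      using that(2) by blast
    hence "iota (inverse pi) * ?g \<in> ?A (Suc n)"
      unfolding auto_blowup_ring.simps neron_blowup_id_def by (rule subsetD[OF sg_sub UnI2])
    moreover have "iota (inverse pi) * ?g = iota (pi ^ m) * f"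
    proof -
      have "iota (inverse pi) * ?g = iota (inverse pi * pi ^ Suc m) * f"
        using iota_hom(3)[of "inverse pi" "pi ^ Suc m"] by (simp add: mult.assoc)
      also have "inverse pi * pi ^ Suc m = pi ^ m" using pi0 by simp
      finally show ?thesis .
    qed
    ultimately show ?thesis by (simp only:)
  qed
  have key: "\<And>n f. eps f \<in> R \<Longrightarrow> iota (pi ^ m) * f \<in> ?A n \<Longrightarrow> f \<in> ?A (n + m)" for m
  proof (induction m)
    case 0 then show ?case using iota_hom(1) by simp
  next
    case (Suc m)
    have "iota (pi ^ m) * f \<in> ?A (Suc n)" using step Suc.prems by blast
    from Suc.IH[OF Suc.prems(1) this] show ?case by simp
  qed
  show ?thesis
  proof
    show "auto_blowup_limit_ring iota eps R pi A0 \<subseteq> {f. eps f \<in> R}"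
      unfolding auto_blowup_limit_ring_def using up by blast
  next
    show "{f. eps f \<in> R} \<subseteq> auto_blowup_limit_ring iota eps R pi A0"
    proof
      fix f assume "f \<in> {f. eps f \<in> R}"
      moreover obtain m where "iota (pi ^ m) * f \<in> A0" using A0_gen by blast
      ultimately have "f \<in> ?A (0 + m)" by (intro key) simp_all
      thus "f \<in> auto_blowup_limit_ring iota eps R pi A0"
        unfolding auto_blowup_limit_ring_def by blast
    qed
  qed
qed

end
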